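(* Let $N\geq 1$ and let $U\in M_{2N}(\mathbb{C})$ be a unitary matrix that is antisymmetric, i.e. $U^{\rm T}=-U$. Define the linear map $\Phi^U_{4N}:M_{4N}(\mathbb{C})\to M_{4N}(\mathbb{C})$ as follows: writing $X\in M_{4N}(\mathbb{C})$ in block form $X=\begin{pmatrix} X_{11} & X_{12}\\ X_{21} & X_{22}\end{pmatrix}$ with $X_{kl}\in M_{2N}(\mathbb{C})$, $$\Phi^U_{4N}(X)=\frac{1}{2N}\begin{pmatrix} \mathbb{I}_{2N}\,\mathrm{Tr}X_{22} & -\big(X_{12}+UX_{21}^{\rm T}U^\dagger\big)\\ -\big(X_{21}+UX_{12}^{\rm T}U^\dagger\big) & \mathbb{I}_{2N}\,\mathrm{Tr}X_{11}\end{pmatrix}.$$ Then $\Phi^U_{4N}$ is a positive map, i.e. $\Phi^U_{4N}(X)\geq 0$ for every positive semidefinite $X\in M_{4N}(\mathbb{C})$.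
   Context: $X^{\rm T}$ denotes the transpose, $U^\dagger$ the conjugate transpose, and $\mathbb{I}_{2N}$ the $2N\times 2N$ identity matrix. *)

theory Defs
  imports "Jordan_Normal_Form.Schur_Decomposition"
begin

definition mtrace :: "complex mat \<Rightarrow> complex" where
  "mtrace A = (\<Sum>i<dim_row A. A $$ (i, i))"

definition unitary_mat :: "nat \<Rightarrow> complex mat \<Rightarrow> bool" where
  "unitary_mat n U \<longleftrightarrow> U \<in> carrier_mat n n \<and>
     U * mat_adjoint U = 1\<^sub>m n \<and> mat_adjoint U * U = 1\<^sub>m n"

definition psd_mat :: "nat \<Rightarrow> complex mat \<Rightarrow> bool" where
  "psd_mat n X \<longleftrightarrow> X \<in> carrier_mat n n \<and> mat_adjoint X = X \<and>
     (\<forall>v \<in> carrier_vec n. Im (conjugate v \<bullet> (X *\<^sub>v v)) = 0 \<and>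
                             0 \<le> Re (conjugate v \<bullet> (X *\<^sub>v v)))"

definition Phi :: "nat \<Rightarrow> complex mat \<Rightarrow> complex mat \<Rightarrow> complex mat" where
  "Phi N U X = (case split_block X (2*N) (2*N) of (X11, X12, X21, X22) \<Rightarrow>
     (1 / of_nat (2*N)) \<cdot>\<^sub>m four_block_mat
        (mtrace X22 \<cdot>\<^sub>m 1\<^sub>m (2*N))
        (- (X12 + U * transpose_mat X21 * mat_adjoint U))
        (- (X21 + U * transpose_mat X12 * mat_adjoint U))
        (mtrace X11 \<cdot>\<^sub>m 1\<^sub>m (2*N)))"

end

theory Submission
  imports Defs
begin


definition sf :: "complex mat \<Rightarrow> complex vec \<Rightarrow> complex vec \<Rightarrow> complex" where
  "sf A x y = conjugate x \<bullet> (A *\<^sub>v y)"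

lemma sf_sum:
  assumes "A \<in> carrier_mat n n" "x \<in> carrier_vec n" "y \<in> carrier_vec n"
  shows "sf A x y = (\<Sum>i<n. \<Sum>j<n. cnj (x$i) * A$$(i,j) * y$j)"
  using assms unfolding sf_def scalar_prod_def mult_mat_vec_def row_def
  by (auto simp: sum_distrib_left atLeast0LessThan mult.assoc intro!: sum.cong)

lemma sf_add_left:
  assumes "A \<in> carrier_mat n n" "x \<in> carrier_vec n" "z \<in> carrier_vec n" "y \<in> carrier_vec n"
  shows "sf A (x + z) y = sf A x y + sf A z y"
  using assms by (simp add: sf_sum distrib_right sum.distrib)

lemma sf_add_right:
  assumes "A \<in> carrier_mat n n" "x \<in> carrier_vec n" "z \<in> carrier_vec n" "y \<in> carrier_vec n"
  shows "sf A y (x + z) = sf A y x + sf A y z"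
  using assms by (simp add: sf_sum distrib_left sum.distrib)

lemma sf_smult_left:
  assumes "A \<in> carrier_mat n n" "x \<in> carrier_vec n" "y \<in> carrier_vec n"
  shows "sf A (c \<cdot>\<^sub>v x) y = cnj c * sf A x y"
  using assms by (simp add: sf_sum sum_distrib_left mult.assoc)

lemma sf_smult_right:
  assumes "A \<in> carrier_mat n n" "x \<in> carrier_vec n" "y \<in> carrier_vec n"
  shows "sf A x (c \<cdot>\<^sub>v y) = c * sf A x y"
  using assms by (simp add: sf_sum sum_distrib_left ac_simps)

lemma sf_unit:
  assumes "A \<in> carrier_mat n n" "i < n" "j < n"
  shows "sf A (unit_vec n i) (unit_vec n j) = A $$ (i,j)"
proof -
  have "conjugate (unit_vec n i) = (unit_vec n i :: complex vec)"
    by (rule eq_vecI, auto simp: unit_vec_def)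
  then show ?thesis using assms unfolding sf_def
    by (simp add: scalar_prod_left_unit[of _ n])
qed

lemma sf_quad:
  assumes "A \<in> carrier_mat n n" "x \<in> carrier_vec n" "y \<in> carrier_vec n"
  shows "sf A (x + c \<cdot>\<^sub>v y) (x + c \<cdot>\<^sub>v y) = sf A x x + c * sf A x y + cnj c * sf A y x + cnj c * c * sf A y y"
  using assms by (simp add: sf_add_left[of A n] sf_add_right[of A n] sf_smult_left[of A n] sf_smult_right[of A n] algebra_simps)

lemma herm_from_real:
  assumes A: "A \<in> carrier_mat n n" and re: "\<And>z. z \<in> carrier_vec n \<Longrightarrow> Im (sf A z z) = 0"
  shows "mat_adjoint A = A"
proof (rule eq_matI)
  show "dim_row (mat_adjoint A) = dim_row A" "dim_col (mat_adjoint A) = dim_col A"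
    using A unfolding mat_adjoint_def by auto
  fix i j assume i: "i < dim_row A" and j: "j < dim_col A"
  then have i': "i < n" and j': "j < n" using A by auto
  have adj: "mat_adjoint A $$ (i,j) = cnj (A $$ (j,i))"
    using i' j' A unfolding mat_adjoint_def by (simp add: mat_of_rows_def cols_def)
  let ?ei = "unit_vec n i :: complex vec" and ?ej = "unit_vec n j :: complex vec"
  have ci: "?ei \<in> carrier_vec n" "?ej \<in> carrier_vec n" by auto
  have q1: "Im (sf A (?ej + 1 \<cdot>\<^sub>v ?ei) (?ej + 1 \<cdot>\<^sub>v ?ei)) = 0"
    using re ci by auto
  have q2: "Im (sf A (?ej + \<i> \<cdot>\<^sub>v ?ei) (?ej + \<i> \<cdot>\<^sub>v ?ei)) = 0"
    using re ci by auto
  have di: "Im (A $$ (i,i)) = 0" "Im (A $$ (j,j)) = 0"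
    using re[OF ci(1)] re[OF ci(2)] sf_unit[OF A] i' j' by auto
  note q1[unfolded sf_quad[OF A ci(2) ci(1)] sf_unit[OF A] ] q2[unfolded sf_quad[OF A ci(2) ci(1)]]
  then have "Im (A $$ (j,i) + A $$ (i,j)) = 0" "Re (A $$ (j,i)) - Re (A $$ (i,j)) = 0"
    using di i' j' by (auto simp: sf_unit[OF A])
  then show "mat_adjoint A $$ (i,j) = A $$ (i,j)"
    unfolding adj by (auto simp: complex_eq_iff)
qed



lemma conj_append: "conjugate (a @\<^sub>v c) = conjugate a @\<^sub>v (conjugate c :: complex vec)"
  by (rule eq_vecI, auto)

lemma sf_block:
  assumes X11: "X11 \<in> carrier_mat n n" and X12: "X12 \<in> carrier_mat n n"
    and X21: "X21 \<in> carrier_mat n n" and X22: "X22 \<in> carrier_mat n n"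
    and a: "a \<in> carrier_vec n" and b: "b \<in> carrier_vec n"
    and c: "c \<in> carrier_vec n" and d: "d \<in> carrier_vec n"
  shows "sf (four_block_mat X11 X12 X21 X22) (a @\<^sub>v c) (b @\<^sub>v d)
     = sf X11 a b + sf X12 a d + sf X21 c b + sf X22 c d"
proof -
  have "four_block_mat X11 X12 X21 X22 *\<^sub>v (b @\<^sub>v d) = (X11 *\<^sub>v b + X12 *\<^sub>v d) @\<^sub>v (X21 *\<^sub>v b + X22 *\<^sub>v d)"
    by (rule four_block_mat_mult_vec[OF X11 X12 X21 X22 b d])
  then show ?thesis unfolding sf_def conj_append using assms
    by (simp add: scalar_prod_append[of _ n _ n] scalar_prod_add_distrib[of _ n])
qed

lemma sf_zero_right: "A \<in> carrier_mat n n \<Longrightarrow> x \<in> carrier_vec n \<Longrightarrow> sf A x (0\<^sub>v n) = 0"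
  by (simp add: sf_sum)
lemma sf_zero_left: "A \<in> carrier_mat n n \<Longrightarrow> x \<in> carrier_vec n \<Longrightarrow> sf A (0\<^sub>v n) x = 0"
  by (simp add: sf_sum)

lemma scalar_prod_transpose:
  assumes A: "A \<in> carrier_mat n n" and x: "x \<in> carrier_vec n" and y: "(y::complex vec) \<in> carrier_vec n"
  shows "x \<bullet> (A *\<^sub>v y) = (transpose_mat A *\<^sub>v x) \<bullet> y"
proof -
  have "x \<bullet> (A *\<^sub>v y) = (\<Sum>i<n. x$i * (\<Sum>j<n. A$$(i,j) * y$j))"
    using assms unfolding scalar_prod_def mult_mat_vec_def row_def
    by (auto simp: atLeast0LessThan intro!: sum.cong)
  also have "\<dots> = (\<Sum>i<n. \<Sum>j<n. x$i * (A$$(i,j) * y$j))"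
    by (simp add: sum_distrib_left mult.assoc)
  also have "\<dots> = (\<Sum>j<n. \<Sum>i<n. x$i * (A$$(i,j) * y$j))"
    by (rule sum.swap)
  also have "\<dots> = (\<Sum>j<n. (\<Sum>i<n. A$$(i,j) * x$i) * y$j)"
    by (auto simp: sum_distrib_left sum_distrib_right ac_simps intro!: sum.cong)
  also have "\<dots> = (transpose_mat A *\<^sub>v x) \<bullet> y"
    using assms unfolding scalar_prod_def mult_mat_vec_def row_def
    by (auto simp: atLeast0LessThan intro!: sum.cong)
  finally show ?thesis .
qed

lemma adj_conj:
  fixes U :: "complex mat"
  assumes U: "U \<in> carrier_mat n n" and b: "b \<in> carrier_vec n"
  shows "mat_adjoint U *\<^sub>v b = conjugate (transpose_mat U *\<^sub>v conjugate b)"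
proof (rule eq_vecI)
  fix i assume "i < dim_vec (conjugate (transpose_mat U *\<^sub>v conjugate b))"
  then have i: "i < n" using U by auto
  have "(mat_adjoint U *\<^sub>v b) $ i = (\<Sum>j<n. cnj (U$$(j,i)) * b$j)"
    using U b i unfolding mat_adjoint_def mult_mat_vec_def scalar_prod_def
    by (auto simp: mat_of_rows_def cols_def atLeast0LessThan intro!: sum.cong)
  also have "\<dots> = conjugate (transpose_mat U *\<^sub>v conjugate b) $ i"
    using U b i unfolding mult_mat_vec_def scalar_prod_def
    by (auto simp: atLeast0LessThan sum_conjugate intro!: sum.cong)
  finally show "(mat_adjoint U *\<^sub>v b) $ i = conjugate (transpose_mat U *\<^sub>v conjugate b) $ i" .
qed (use U b in \<open>auto simp: mat_adjoint_def\<close>)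

lemma sf_W:
  assumes U: "U \<in> carrier_mat n n" and M: "M \<in> carrier_mat n n"
    and a: "a \<in> carrier_vec n" and b: "b \<in> carrier_vec n"
  shows "sf (U * transpose_mat M * mat_adjoint U) a b
    = sf M (transpose_mat U *\<^sub>v conjugate b) (transpose_mat U *\<^sub>v conjugate a)"
proof -
  have Ua: "mat_adjoint U \<in> carrier_mat n n" using U by (auto simp: mat_adjoint_def)
  let ?z = "mat_adjoint U *\<^sub>v b" and ?r = "transpose_mat U *\<^sub>v conjugate a"
  have z: "?z \<in> carrier_vec n" and r: "?r \<in> carrier_vec n" using Ua U b a by auto
  have "sf (U * transpose_mat M * mat_adjoint U) a b = conjugate a \<bullet> (U *\<^sub>v (transpose_mat M *\<^sub>v ?z))"
    unfolding sf_def using U M Ua b by (subst assoc_mult_mat_vec[of _ n n], auto)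
  also have "\<dots> = ?r \<bullet> (transpose_mat M *\<^sub>v ?z)"
    by (rule scalar_prod_transpose[OF U], use a M z in auto)
  also have "\<dots> = (M *\<^sub>v ?r) \<bullet> ?z"
    using scalar_prod_transpose[of "transpose_mat M" n ?r ?z] M r z by auto
  also have "\<dots> = ?z \<bullet> (M *\<^sub>v ?r)"
    by (rule comm_scalar_prod[of _ n], use M r z in auto)
  finally show ?thesis unfolding sf_def adj_conj[OF U b] by simp
qed

lemma unit_norm:
  fixes U :: "complex mat"
  assumes U: "unitary_mat n U" and b: "b \<in> carrier_vec n"
  shows "conjugate (transpose_mat U *\<^sub>v conjugate b) \<bullet> (transpose_mat U *\<^sub>v conjugate b) = conjugate b \<bullet> b"
proof -
  have Uc: "U \<in> carrier_mat n n" and UU: "U * mat_adjoint U = 1\<^sub>m n" using U unfolding unitary_mat_def by auto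
  have Ua: "mat_adjoint U \<in> carrier_mat n n" using Uc by (auto simp: mat_adjoint_def)
  have "conjugate (transpose_mat U *\<^sub>v conjugate b) \<bullet> (transpose_mat U *\<^sub>v conjugate b)
     = (mat_adjoint U *\<^sub>v b) \<bullet> (transpose_mat U *\<^sub>v conjugate b)" by (simp add: adj_conj[OF Uc b])
  also have "\<dots> = (U *\<^sub>v (mat_adjoint U *\<^sub>v b)) \<bullet> conjugate b"
    using scalar_prod_transpose[of "transpose_mat U" n "mat_adjoint U *\<^sub>v b" "conjugate b"] Uc Ua b by auto
  also have "U *\<^sub>v (mat_adjoint U *\<^sub>v b) = b"
    using UU Uc Ua b by (metis assoc_mult_mat_vec one_mult_mat_vec)
  finally show ?thesis using b by (simp add: comm_scalar_prod[of _ n])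
qed

lemma antisym_orth:
  fixes U :: "complex mat"
  assumes Uc: "U \<in> carrier_mat n n" and T: "transpose_mat U = - U" and a: "a \<in> carrier_vec n"
  shows "conjugate a \<bullet> (transpose_mat U *\<^sub>v conjugate a) = 0"
proof -
  let ?x = "conjugate a"
  have x: "?x \<in> carrier_vec n" using a by auto
  have "?x \<bullet> (transpose_mat U *\<^sub>v ?x) = (U *\<^sub>v ?x) \<bullet> ?x"
    using scalar_prod_transpose[of "transpose_mat U" n ?x ?x] Uc x by auto
  also have "\<dots> = ?x \<bullet> (U *\<^sub>v ?x)" using x Uc by (simp add: comm_scalar_prod[of _ n])
  also have "\<dots> = - (?x \<bullet> (transpose_mat U *\<^sub>v ?x))"
  proof -
    have "- U *\<^sub>v ?x = - (U *\<^sub>v ?x)" by (rule uminus_mult_mat_vec, use a Uc in auto)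
    moreover have "?x \<bullet> - (U *\<^sub>v ?x) = - (?x \<bullet> (U *\<^sub>v ?x))"
      by (rule scalar_prod_uminus_right, use a Uc in auto)
    ultimately show ?thesis unfolding T by simp
  qed
  finally show ?thesis by simp
qed

lemma cnorm_real:
  fixes a :: "complex vec"
  assumes a: "a \<in> carrier_vec n"
  shows "conjugate a \<bullet> a = complex_of_real (\<Sum>i<n. (cmod (a$i))^2)"
    and "(\<Sum>i<n. (cmod (a$i))^2) \<ge> 0"
    and "(\<Sum>i<n. (cmod (a$i))^2) = 0 \<Longrightarrow> a = 0\<^sub>v n"
proof -
  have h: "\<And>z. cnj z * z = (complex_of_real (cmod z))^2"
    by (subst mult.commute, subst of_real_power[symmetric], subst complex_norm_square, simp)
  show "conjugate a \<bullet> a = complex_of_real (\<Sum>i<n. (cmod (a$i))^2)"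
    using a unfolding scalar_prod_def
    by (auto simp: atLeast0LessThan h intro!: sum.cong)
  show "(\<Sum>i<n. (cmod (a$i))^2) \<ge> 0" by (simp add: sum_nonneg)
  assume "(\<Sum>i<n. (cmod (a$i))^2) = 0"
  then have "\<forall>i\<in>{..<n}. (cmod (a$i))^2 = 0" by (subst (asm) sum_nonneg_eq_0_iff, auto)
  then show "a = 0\<^sub>v n" using a by (intro eq_vecI, auto)
qed



lemma delta_sum:
  fixes f :: "nat \<Rightarrow> complex"
  assumes "i < n"
  shows "(\<Sum>k<n. (if i = k then c else 0) * f k) = c * f i"
    and "(\<Sum>k<n. f k * (if i = k then c else 0)) = f i * c"
  using assms by (simp_all add: if_distrib[of "\<lambda>x. x * _"] if_distrib[of "\<lambda>x. _ * x"] cong: if_cong)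

lemma G_formula:
  fixes u r :: "complex vec" and al :: complex
  assumes i: "i < n" and j: "j < n" and al: "cnj al = al"
    and uu: "(\<Sum>k<n. cnj (u$k) * u$k) = al" and rr: "(\<Sum>k<n. cnj (r$k) * r$k) = al"
    and ur: "(\<Sum>k<n. cnj (u$k) * r$k) = 0"
  shows "(\<Sum>k<n. cnj ((if i = k then al else 0) - u$i * cnj (u$k) - r$i * cnj (r$k))
                 * ((if j = k then al else 0) - u$j * cnj (u$k) - r$j * cnj (r$k)))
       = al * ((if i = j then al else 0) - cnj (u$i) * u$j - cnj (r$i) * r$j)"
proof -
  have ru: "(\<Sum>k<n. cnj (r$k) * u$k) = 0"
    using arg_cong[OF ur, of cnj] by (simp add: mult.commute)
  have e: "\<And>k. cnj ((if i = k then al else 0) - u$i * cnj (u$k) - r$i * cnj (r$k))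
                 * ((if j = k then al else 0) - u$j * cnj (u$k) - r$j * cnj (r$k))
     = (if i = k then al else 0) * ((if j = k then al else 0) - u$j * cnj (u$k) - r$j * cnj (r$k))
       - cnj (u$i) * ((if j = k then al else 0) * u$k)
       + cnj (u$i) * u$j * (cnj (u$k) * u$k)
       + cnj (u$i) * r$j * (cnj (r$k) * u$k)
       - cnj (r$i) * ((if j = k then al else 0) * r$k)
       + cnj (r$i) * u$j * (cnj (u$k) * r$k)
       + cnj (r$i) * r$j * (cnj (r$k) * r$k)"
    using al by (auto simp: algebra_simps)
  have s1: "(\<Sum>k<n. (if i = k then al else 0) * ((if j = k then al else 0) - u$j * cnj (u$k) - r$j * cnj (r$k)))
      = al * ((if j = i then al else 0) - u$j * cnj (u$i) - r$j * cnj (r$i))"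
    by (rule delta_sum(1)[OF i])
  have s2: "(\<Sum>k<n. (if j = k then al else 0) * u$k) = al * u$j"
    by (rule delta_sum(1)[OF j])
  have s3: "(\<Sum>k<n. (if j = k then al else 0) * r$k) = al * r$j"
    by (rule delta_sum(1)[OF j])
  have "(\<Sum>k<n. (if i = k then al else 0) * ((if j = k then al else 0) - u$j * cnj (u$k) - r$j * cnj (r$k))
       - cnj (u$i) * ((if j = k then al else 0) * u$k)
       + cnj (u$i) * u$j * (cnj (u$k) * u$k)
       + cnj (u$i) * r$j * (cnj (r$k) * u$k)
       - cnj (r$i) * ((if j = k then al else 0) * r$k)
       + cnj (r$i) * u$j * (cnj (u$k) * r$k)
       + cnj (r$i) * r$j * (cnj (r$k) * r$k))
     = (\<Sum>k<n. (if i = k then al else 0) * ((if j = k then al else 0) - u$j * cnj (u$k) - r$j * cnj (r$k)))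
       - cnj (u$i) * (\<Sum>k<n. (if j = k then al else 0) * u$k)
       + cnj (u$i) * u$j * (\<Sum>k<n. cnj (u$k) * u$k)
       + cnj (u$i) * r$j * (\<Sum>k<n. cnj (r$k) * u$k)
       - cnj (r$i) * (\<Sum>k<n. (if j = k then al else 0) * r$k)
       + cnj (r$i) * u$j * (\<Sum>k<n. cnj (u$k) * r$k)
       + cnj (r$i) * r$j * (\<Sum>k<n. cnj (r$k) * r$k)"
    by (simp only: sum.distrib sum_subtractf sum_distrib_left)
  also have "\<dots> = al * ((if i = j then al else 0) - cnj (u$i) * u$j - cnj (r$i) * r$j)"
    unfolding s1 s2 s3 uu rr ur ru using al
    by (cases "i = j") (simp_all add: algebra_simps)
  finally show ?thesis unfolding e .
qed



lemma trace_lemma: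
  fixes Y :: "complex mat" and u r :: "complex vec" and al :: complex
  assumes Y: "Y \<in> carrier_mat n n" and u: "u \<in> carrier_vec n" and r: "r \<in> carrier_vec n"
    and al: "cnj al = al"
    and uu: "conjugate u \<bullet> u = al" and rr: "conjugate r \<bullet> r = al" and ur: "conjugate u \<bullet> r = 0"
  shows "(\<Sum>k<n. sf Y (vec n (\<lambda>j. (if j = k then al else 0) - u$j * cnj (u$k) - r$j * cnj (r$k)))
                      (vec n (\<lambda>j. (if j = k then al else 0) - u$j * cnj (u$k) - r$j * cnj (r$k))))
     = al * (al * mtrace Y - sf Y u u - sf Y r r)"
proof -
  define c where "c k j = (if j = k then al else 0) - u$j * cnj (u$k) - r$j * cnj (r$k)" for k j
  have uu': "(\<Sum>k<n. cnj (u$k) * u$k) = al" using uu u unfolding scalar_prod_def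
    by (simp add: atLeast0LessThan)
  have rr': "(\<Sum>k<n. cnj (r$k) * r$k) = al" using rr r unfolding scalar_prod_def
    by (simp add: atLeast0LessThan)
  have ur': "(\<Sum>k<n. cnj (u$k) * r$k) = 0" using ur u r unfolding scalar_prod_def
    by (simp add: atLeast0LessThan)
  have G: "(\<Sum>k<n. cnj (c k i) * c k j) = al * ((if i = j then al else 0) - cnj (u$i) * u$j - cnj (r$i) * r$j)"
    if "i < n" "j < n" for i j
    unfolding c_def by (rule G_formula[OF that al uu' rr' ur'])
  have "(\<Sum>k<n. sf Y (vec n (c k)) (vec n (c k)))
      = (\<Sum>k<n. \<Sum>i<n. \<Sum>j<n. cnj (c k i) * Y$$(i,j) * c k j)"
    using Y by (simp add: sf_sum)
  also have "\<dots> = (\<Sum>i<n. \<Sum>k<n. \<Sum>j<n. cnj (c k i) * Y$$(i,j) * c k j)"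
    by (rule sum.swap)
  also have "\<dots> = (\<Sum>i<n. \<Sum>j<n. \<Sum>k<n. cnj (c k i) * Y$$(i,j) * c k j)"
    by (rule sum.cong[OF refl], rule sum.swap)
  also have "\<dots> = (\<Sum>i<n. \<Sum>j<n. Y$$(i,j) * (\<Sum>k<n. cnj (c k i) * c k j))"
    by (simp add: sum_distrib_left ac_simps)
  also have "\<dots> = (\<Sum>i<n. \<Sum>j<n. Y$$(i,j) * (al * ((if i = j then al else 0) - cnj (u$i) * u$j - cnj (r$i) * r$j)))"
    by (rule sum.cong[OF refl], rule sum.cong[OF refl], simp add: G)
  also have "\<dots> = (\<Sum>i<n. \<Sum>j<n. al * (Y$$(i,j) * (if i = j then al else 0))
       - al * (cnj (u$i) * Y$$(i,j) * u$j) - al * (cnj (r$i) * Y$$(i,j) * r$j))"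
    by (rule sum.cong[OF refl], rule sum.cong[OF refl], simp add: algebra_simps)
  also have "\<dots> = al * (\<Sum>i<n. \<Sum>j<n. Y$$(i,j) * (if i = j then al else 0))
       - al * (\<Sum>i<n. \<Sum>j<n. cnj (u$i) * Y$$(i,j) * u$j) - al * (\<Sum>i<n. \<Sum>j<n. cnj (r$i) * Y$$(i,j) * r$j)"
    by (simp only: sum.distrib sum_subtractf sum_distrib_left)
  also have "(\<Sum>i<n. \<Sum>j<n. Y$$(i,j) * (if i = j then al else 0)) = (\<Sum>i<n. Y$$(i,i) * al)"
    by (rule sum.cong[OF refl], rule delta_sum(2), simp)
  also have "\<dots> = al * mtrace Y" using Y unfolding mtrace_def
    by (simp add: sum_distrib_left mult.commute)
  finally show ?thesis unfolding c_def using Y u r by (simp add: sf_sum algebra_simps)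
qed


lemma sum_pos_c:
  assumes "\<forall>k\<in>S. Im (f k) = 0 \<and> Re (f k) \<ge> 0"
  shows "Im (sum f S) = 0 \<and> Re (sum f S) \<ge> 0"
  using assms by (auto simp: Im_sum Re_sum intro!: sum_nonneg sum.neutral)

lemma nonneg_trace:
  fixes Y :: "complex mat"
  assumes Y: "Y \<in> carrier_mat n n"
    and H: "\<And>z. z \<in> carrier_vec n \<Longrightarrow> Im (sf Y z z) = 0 \<and> Re (sf Y z z) \<ge> 0"
  shows "Im (mtrace Y) = 0 \<and> Re (mtrace Y) \<ge> 0"
proof -
  have d: "Y $$ (i,i) = sf Y (unit_vec n i) (unit_vec n i)" if "i < n" for i
    using sf_unit[OF Y that that] by simp
  have "\<forall>i\<in>{..<n}. Im (Y $$ (i,i)) = 0 \<and> Re (Y $$ (i,i)) \<ge> 0"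
    using d H by auto
  moreover have "dim_row Y = n" using Y by simp
  ultimately show ?thesis unfolding mtrace_def by (simp only:) (rule sum_pos_c)
qed

lemma tl_pos:
  fixes Y :: "complex mat" and u r :: "complex vec" and al :: real
  assumes Y: "Y \<in> carrier_mat n n" and u: "u \<in> carrier_vec n" and r: "r \<in> carrier_vec n"
    and H: "\<And>z. z \<in> carrier_vec n \<Longrightarrow> Im (sf Y z z) = 0 \<and> Re (sf Y z z) \<ge> 0"
    and al: "al > 0"
    and uu: "conjugate u \<bullet> u = of_real al" and rr: "conjugate r \<bullet> r = of_real al" and ur: "conjugate u \<bullet> r = 0"
  shows "Im (of_real al * mtrace Y - sf Y u u - sf Y r r) = 0 \<and> Re (of_real al * mtrace Y - sf Y u u - sf Y r r) \<ge> 0"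
proof -
  let ?E = "of_real al * mtrace Y - sf Y u u - sf Y r r"
  let ?c = "\<lambda>k. vec n (\<lambda>j. (if j = k then of_real al else 0) - u$j * cnj (u$k) - r$j * cnj (r$k))"
  have eq: "(\<Sum>k<n. sf Y (?c k) (?c k)) = of_real al * ?E"
    by (rule trace_lemma[OF Y u r _ uu rr ur], simp)
  have "\<forall>k\<in>{..<n}. Im (sf Y (?c k) (?c k)) = 0 \<and> Re (sf Y (?c k) (?c k)) \<ge> 0"
    using H by auto
  then have "Im (\<Sum>k<n. sf Y (?c k) (?c k)) = 0 \<and> Re (\<Sum>k<n. sf Y (?c k) (?c k)) \<ge> 0"
    by (rule sum_pos_c)
  then have "Im (of_real al * ?E) = 0 \<and> Re (of_real al * ?E) \<ge> 0" unfolding eq .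
  then show ?thesis using al by (simp add: zero_le_mult_iff)
qed



lemma mult_zero_vec': "A \<in> carrier_mat n n \<Longrightarrow> A *\<^sub>v 0\<^sub>v n = (0\<^sub>v n :: complex vec)"
  by (rule eq_vecI, auto)

lemma prod_pos_c:
  assumes "Im x = 0" "Re x \<ge> 0" "(y::real) \<ge> 0"
  shows "Im (x * of_real y) = 0 \<and> Re (x * of_real y) \<ge> 0"
  using assms by simp

lemma K_pos:
  fixes X11 X12 X21 X22 U :: "complex mat" and a b :: "complex vec"
  assumes X11: "X11 \<in> carrier_mat n n" and X12: "X12 \<in> carrier_mat n n"
    and X21: "X21 \<in> carrier_mat n n" and X22: "X22 \<in> carrier_mat n n"
    and H: "\<And>z. z \<in> carrier_vec (n+n) \<Longrightarrow>
         Im (sf (four_block_mat X11 X12 X21 X22) z z) = 0 \<and> Re (sf (four_block_mat X11 X12 X21 X22) z z) \<ge> 0"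
    and Uu: "unitary_mat n U" and UT: "transpose_mat U = - U"
    and a: "a \<in> carrier_vec n" and b: "b \<in> carrier_vec n"
  shows "Im (mtrace X22 * (conjugate a \<bullet> a) + mtrace X11 * (conjugate b \<bullet> b) - sf X12 a b - sf X21 b a
            - sf X21 (transpose_mat U *\<^sub>v conjugate b) (transpose_mat U *\<^sub>v conjugate a)
            - sf X12 (transpose_mat U *\<^sub>v conjugate a) (transpose_mat U *\<^sub>v conjugate b)) = 0
       \<and> Re (mtrace X22 * (conjugate a \<bullet> a) + mtrace X11 * (conjugate b \<bullet> b) - sf X12 a b - sf X21 b a
            - sf X21 (transpose_mat U *\<^sub>v conjugate b) (transpose_mat U *\<^sub>v conjugate a)
            - sf X12 (transpose_mat U *\<^sub>v conjugate a) (transpose_mat U *\<^sub>v conjugate b)) \<ge> 0"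
proof -
  define F where "F = four_block_mat X11 X12 X21 X22"
  define p where "p = transpose_mat U *\<^sub>v conjugate b"
  define r where "r = transpose_mat U *\<^sub>v conjugate a"
  define K where "K = mtrace X22 * (conjugate a \<bullet> a) + mtrace X11 * (conjugate b \<bullet> b) - sf X12 a b - sf X21 b a
            - sf X21 p r - sf X12 r p"
  have Uc: "U \<in> carrier_mat n n" using Uu unfolding unitary_mat_def by auto
  have p: "p \<in> carrier_vec n" and r: "r \<in> carrier_vec n" unfolding p_def r_def using Uc a b by auto
  have blk: "sf F (x @\<^sub>v c) (y @\<^sub>v d) = sf X11 x y + sf X12 x d + sf X21 c y + sf X22 c d"
    if "x \<in> carrier_vec n" "y \<in> carrier_vec n" "c \<in> carrier_vec n" "d \<in> carrier_vec n" for x y c d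
    unfolding F_def by (rule sf_block[OF X11 X12 X21 X22 that(1,2,3,4)])
  have HF: "Im (sf F z z) = 0 \<and> Re (sf F z z) \<ge> 0" if "z \<in> carrier_vec (n+n)" for z
    using H[OF that] unfolding F_def .
  have H11: "Im (sf X11 z z) = 0 \<and> Re (sf X11 z z) \<ge> 0" if z: "z \<in> carrier_vec n" for z
  proof -
    have "sf F (z @\<^sub>v 0\<^sub>v n) (z @\<^sub>v 0\<^sub>v n) = sf X11 z z"
      using blk[OF z z, of "0\<^sub>v n" "0\<^sub>v n"] z X11 X12 X21 X22
      by (simp add: sf_zero_left[of _ n] sf_zero_right[of _ n])
    then show ?thesis using HF[of "z @\<^sub>v 0\<^sub>v n"] z by auto
  qed
  have H22: "Im (sf X22 z z) = 0 \<and> Re (sf X22 z z) \<ge> 0" if z: "z \<in> carrier_vec n" for z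
  proof -
    have "sf F (0\<^sub>v n @\<^sub>v z) (0\<^sub>v n @\<^sub>v z) = sf X22 z z"
      using blk[of "0\<^sub>v n" "0\<^sub>v n" z z] z X11 X12 X21 X22
      by (simp add: sf_zero_left[of _ n] sf_zero_right[of _ n])
    then show ?thesis using HF[of "0\<^sub>v n @\<^sub>v z"] z by auto
  qed
  define al where "al = (\<Sum>i<n. (cmod (a$i))^2)"
  define be where "be = (\<Sum>i<n. (cmod (b$i))^2)"
  have aa: "conjugate a \<bullet> a = of_real al" and al0: "al \<ge> 0"
    using cnorm_real[OF a] unfolding al_def by auto
  have bb: "conjugate b \<bullet> b = of_real be" and be0: "be \<ge> 0"
    using cnorm_real[OF b] unfolding be_def by auto
  have rr: "conjugate r \<bullet> r = of_real al" unfolding r_def using unit_norm[OF Uu a] aa by simp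
  have pp: "conjugate p \<bullet> p = of_real be" unfolding p_def using unit_norm[OF Uu b] bb by simp
  have ar: "conjugate a \<bullet> r = 0" unfolding r_def by (rule antisym_orth[OF Uc UT a])
  have bp: "conjugate b \<bullet> p = 0" unfolding p_def by (rule antisym_orth[OF Uc UT b])
  have T11: "Im (mtrace X11) = 0 \<and> Re (mtrace X11) \<ge> 0" by (rule nonneg_trace[OF X11 H11])
  have T22: "Im (mtrace X22) = 0 \<and> Re (mtrace X22) \<ge> 0" by (rule nonneg_trace[OF X22 H22])
  have "Im K = 0 \<and> Re K \<ge> 0"
  proof (cases "al = 0")
    case True
    then have a0: "a = 0\<^sub>v n" using cnorm_real(3)[OF a] unfolding al_def by auto
    then have r0: "r = 0\<^sub>v n" unfolding r_def using Uc by (simp add: mult_zero_vec'[of _ n])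
    have "K = mtrace X11 * of_real be" unfolding K_def bb using a0 r0 p b X11 X12 X21 X22
      by (simp add: sf_zero_left[of _ n] sf_zero_right[of _ n])
    then show ?thesis using T11 be0 prod_pos_c by auto
  next
    case False
    then have alp: "al > 0" using al0 by auto
    show ?thesis
    proof (cases "be = 0")
      case True
      then have b0: "b = 0\<^sub>v n" using cnorm_real(3)[OF b] unfolding be_def by auto
      then have p0: "p = 0\<^sub>v n" unfolding p_def using Uc by (simp add: mult_zero_vec'[of _ n])
      have "K = mtrace X22 * of_real al" unfolding K_def aa using b0 p0 a r X11 X12 X21 X22
        by (simp add: sf_zero_left[of _ n] sf_zero_right[of _ n])
      then show ?thesis using T22 al0 prod_pos_c by auto
    next
      case False
      then have bep: "be > 0" using be0 by auto
      define E11 where "E11 = of_real al * mtrace X11 - sf X11 a a - sf X11 r r"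
      define E22 where "E22 = of_real be * mtrace X22 - sf X22 b b - sf X22 p p"
      have E11: "Im E11 = 0 \<and> Re E11 \<ge> 0" unfolding E11_def
        by (rule tl_pos[OF X11 a r H11 alp aa rr ar])
      have E22: "Im E22 = 0 \<and> Re E22 \<ge> 0" unfolding E22_def
        by (rule tl_pos[OF X22 b p H22 bep bb pp bp])
      define Q1 where "Q1 = sf F (of_real be \<cdot>\<^sub>v a @\<^sub>v of_real (-al) \<cdot>\<^sub>v b) (of_real be \<cdot>\<^sub>v a @\<^sub>v of_real (-al) \<cdot>\<^sub>v b)"
      define Q2 where "Q2 = sf F (of_real be \<cdot>\<^sub>v r @\<^sub>v of_real (-al) \<cdot>\<^sub>v p) (of_real be \<cdot>\<^sub>v r @\<^sub>v of_real (-al) \<cdot>\<^sub>v p)"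
      have Q1: "Im Q1 = 0 \<and> Re Q1 \<ge> 0" unfolding Q1_def using a b by (intro HF) auto
      have Q2: "Im Q2 = 0 \<and> Re Q2 \<ge> 0" unfolding Q2_def using r p by (intro HF) auto
      have Q1e: "Q1 = of_real (be*be) * sf X11 a a - of_real (al*be) * sf X12 a b
                   - of_real (al*be) * sf X21 b a + of_real (al*al) * sf X22 b b"
        unfolding Q1_def using a b X11 X12 X21 X22
        by (simp add: blk sf_smult_left[of _ n] sf_smult_right[of _ n] algebra_simps)
      have Q2e: "Q2 = of_real (be*be) * sf X11 r r - of_real (al*be) * sf X12 r p
                   - of_real (al*be) * sf X21 p r + of_real (al*al) * sf X22 p p"
        unfolding Q2_def using r p X11 X12 X21 X22
        by (simp add: blk sf_smult_left[of _ n] sf_smult_right[of _ n] algebra_simps)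
      have id: "of_real (al*be) * K = Q1 + Q2 + of_real (be*be) * E11 + of_real (al*al) * E22"
        unfolding Q1e Q2e E11_def E22_def K_def aa bb by (simp add: algebra_simps)
      have "Im (of_real (al*be) * K) = 0 \<and> Re (of_real (al*be) * K) \<ge> 0"
        unfolding id using Q1 Q2 E11 E22 alp bep by simp
      moreover have "al * be > 0" using alp bep by simp
      ultimately show ?thesis by (auto simp: zero_le_mult_iff)
    qed
  qed
  then show ?thesis unfolding K_def p_def r_def .
qed



lemma sf_smult_mat:
  assumes A: "A \<in> carrier_mat n n" and x: "x \<in> carrier_vec n" and y: "y \<in> carrier_vec n"
  shows "sf (c \<cdot>\<^sub>m A) x y = c * sf A x y"
proof -
  have "c \<cdot>\<^sub>m A \<in> carrier_mat n n" using A by simp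
  then show ?thesis using A x y by (simp add: sf_sum[of _ n] sum_distrib_left ac_simps)
qed

lemma sf_scalar_one:
  assumes x: "x \<in> carrier_vec n" and y: "y \<in> carrier_vec n"
  shows "sf (c \<cdot>\<^sub>m 1\<^sub>m n) x y = c * (conjugate x \<bullet> y)"
  using sf_smult_mat[OF one_carrier_mat x y] x y by (simp add: sf_def)

lemma sf_neg_add:
  assumes A: "A \<in> carrier_mat n n" and B: "B \<in> carrier_mat n n"
    and x: "x \<in> carrier_vec n" and y: "y \<in> carrier_vec n"
  shows "sf (- (A + B)) x y = - (sf A x y + sf B x y)"
proof -
  have "- (A + B) \<in> carrier_mat n n" using A B by simp
  then have "sf (- (A + B)) x y = (\<Sum>i<n. \<Sum>j<n. cnj (x$i) * (- (A$$(i,j) + B$$(i,j))) * y$j)"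
    using A B x y by (simp add: sf_sum[of _ n])
  also have "\<dots> = (\<Sum>i<n. \<Sum>j<n. - (cnj (x$i) * A$$(i,j) * y$j) + - (cnj (x$i) * B$$(i,j) * y$j))"
    by (simp add: algebra_simps)
  also have "\<dots> = - ((\<Sum>i<n. \<Sum>j<n. cnj (x$i) * A$$(i,j) * y$j) + (\<Sum>i<n. \<Sum>j<n. cnj (x$i) * B$$(i,j) * y$j))"
    by (simp only: sum.distrib sum_negf minus_add add.commute)
  finally show ?thesis using A B x y by (simp add: sf_sum[of _ n])
qed



theorem proposition1:
  fixes N :: nat and U :: "complex mat"
  assumes "N \<ge> 1"
    and "unitary_mat (2*N) U"
    and "transpose_mat U = - U"
  shows "\<forall>X. psd_mat (4*N) X \<longrightarrow> psd_mat (4*N) (Phi N U X)"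
proof (intro allI impI)
  fix X assume psd: "psd_mat (4*N) X"
  define n where "n = 2*N"
  have n4: "4*N = n + n" unfolding n_def by simp
  have Uu: "unitary_mat n U" using assms(2) unfolding n_def .
  have UT: "transpose_mat U = - U" by (rule assms(3))
  have Uc: "U \<in> carrier_mat n n" using Uu unfolding unitary_mat_def by auto
  have Uac: "mat_adjoint U \<in> carrier_mat n n" using Uc by (auto simp: mat_adjoint_def)
  have npos: "n > 0" unfolding n_def using assms(1) by simp
  have Xc: "X \<in> carrier_mat (n+n) (n+n)" using psd unfolding psd_mat_def n4 by auto
  obtain X11 X12 X21 X22 where sb: "split_block X n n = (X11, X12, X21, X22)"
    using prod_cases4 by blast
  have dims: "dim_row X = n + n" "dim_col X = n + n" using Xc by auto
  note spl = split_block[OF sb dims]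
  have X11: "X11 \<in> carrier_mat n n" and X12: "X12 \<in> carrier_mat n n"
    and X21: "X21 \<in> carrier_mat n n" and X22: "X22 \<in> carrier_mat n n" using spl by auto
  have Xeq: "X = four_block_mat X11 X12 X21 X22" using spl by auto
  define W1 where "W1 = U * transpose_mat X21 * mat_adjoint U"
  define W2 where "W2 = U * transpose_mat X12 * mat_adjoint U"
  have W1: "W1 \<in> carrier_mat n n" unfolding W1_def using Uc Uac X21 by auto
  have W2: "W2 \<in> carrier_mat n n" unfolding W2_def using Uc Uac X12 by auto
  define Fm where "Fm = four_block_mat (mtrace X22 \<cdot>\<^sub>m 1\<^sub>m n) (- (X12 + W1)) (- (X21 + W2)) (mtrace X11 \<cdot>\<^sub>m 1\<^sub>m n)"
  have PhiE: "Phi N U X = (1 / of_nat n) \<cdot>\<^sub>m Fm"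
    unfolding Phi_def Fm_def W1_def W2_def n_def[symmetric] sb by simp
  have B1: "mtrace X22 \<cdot>\<^sub>m 1\<^sub>m n \<in> carrier_mat n n" and B2: "- (X12 + W1) \<in> carrier_mat n n"
    and B3: "- (X21 + W2) \<in> carrier_mat n n" and B4: "mtrace X11 \<cdot>\<^sub>m 1\<^sub>m n \<in> carrier_mat n n"
    using X12 X21 W1 W2 by auto
  have Fc: "Fm \<in> carrier_mat (n+n) (n+n)" unfolding Fm_def using four_block_carrier_mat[OF B1 B4] .
  have Pc: "Phi N U X \<in> carrier_mat (n+n) (n+n)" unfolding PhiE using Fc by simp
  have H: "Im (sf (four_block_mat X11 X12 X21 X22) z z) = 0 \<and> Re (sf (four_block_mat X11 X12 X21 X22) z z) \<ge> 0"
    if "z \<in> carrier_vec (n+n)" for z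
    using psd that unfolding psd_mat_def sf_def n4 Xeq[symmetric] by auto
  have main: "Im (sf (Phi N U X) v v) = 0 \<and> Re (sf (Phi N U X) v v) \<ge> 0" if v: "v \<in> carrier_vec (n+n)" for v
  proof -
    define a where "a = vec_first v n"
    define b where "b = vec_last v n"
    have a: "a \<in> carrier_vec n" and b: "b \<in> carrier_vec n" unfolding a_def b_def by auto
    have vab: "v = a @\<^sub>v b" unfolding a_def b_def using v by simp
    have "sf Fm v v = sf (mtrace X22 \<cdot>\<^sub>m 1\<^sub>m n) a a + sf (- (X12 + W1)) a b
          + sf (- (X21 + W2)) b a + sf (mtrace X11 \<cdot>\<^sub>m 1\<^sub>m n) b b"
      unfolding vab Fm_def by (rule sf_block[OF B1 B2 B3 B4 a a b b])
    also have "\<dots> = mtrace X22 * (conjugate a \<bullet> a) + mtrace X11 * (conjugate b \<bullet> b) - sf X12 a b - sf X21 b a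
            - sf X21 (transpose_mat U *\<^sub>v conjugate b) (transpose_mat U *\<^sub>v conjugate a)
            - sf X12 (transpose_mat U *\<^sub>v conjugate a) (transpose_mat U *\<^sub>v conjugate b)"
      using sf_W[OF Uc X21 a b] sf_W[OF Uc X12 b a] a b
      unfolding W1_def[symmetric] W2_def[symmetric]
      by (simp add: sf_scalar_one sf_neg_add[OF X12 W1 a b] sf_neg_add[OF X21 W2 b a])
    finally have eq: "sf Fm v v = \<dots>" .
    have K: "Im (sf Fm v v) = 0 \<and> Re (sf Fm v v) \<ge> 0"
      unfolding eq by (rule K_pos[OF X11 X12 X21 X22 H Uu UT a b])
    have "sf (Phi N U X) v v = (1 / of_nat n) * sf Fm v v"
      unfolding PhiE by (rule sf_smult_mat[OF Fc v v])
    then show ?thesis using K npos by simp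
  qed
  show "psd_mat (4*N) (Phi N U X)"
    unfolding psd_mat_def n4
  proof (intro conjI ballI)
    show "Phi N U X \<in> carrier_mat (n+n) (n+n)" by (rule Pc)
    show "mat_adjoint (Phi N U X) = Phi N U X"
      by (rule herm_from_real[OF Pc], use main in auto)
  next
    fix v :: "complex vec" assume "v \<in> carrier_vec (n+n)"
    then show "Im (conjugate v \<bullet> (Phi N U X *\<^sub>v v)) = 0" "0 \<le> Re (conjugate v \<bullet> (Phi N U X *\<^sub>v v))"
      using main unfolding sf_def by auto
  qed
qed


end
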